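(* Let $d\ge 4$. If every configuration in $Q^3_d$ of type $\varphi_1$, $\varphi_2$, $\varphi_3$ or $\varphi_4$ is covered, then $Q^3_d$ is loose Hamilton connected.
   Context: $Q^3_d$ is the $3$-uniform hypergraph on $V_d=\{0,1,2\}^d$ whose edges are the triples of pairwise distinct sequences agreeing in $d-1$ coordinates. A loose path from $v_0$ to $v_{2\ell}$ consists of distinct vertices $v_0,\dots,v_{2\ell}$ and distinct edges $e_i=\{v_{2i-2},v_{2i-1},v_{2i}\}$, $i=1,\dots,\ell$. A hypergraph is loose Hamilton connected if for any two distinct vertices $a,b$ there is a loose path from $a$ to $b$ containing all vertices. A configuration is an ordered $4$-tuple $(a,b,x,y)$ of pairwise distinct vertices of $V_d$; it is covered if there is a loose path from $a$ to $b$ whose vertex set is exactly $V_d\setminus\{x,y\}$. For $v\in V_d$ write $v_i$ for its $i$-th coordinate and $v_{[k]}=(v_1,\dots,v_k)$. A symmetry is a bijection of $V_d$ obtained by permuting the coordinates and, independently in each coordinate, permuting the values $\{0,1,2\}$. A configuration $c=(a,b,x,y)$ is of a given type if, after applying some symmetry to all four vertices and possibly interchanging $x$ and $y$, the resulting configuration (still denoted $(a,b,x,y)$) satisfies: $\varphi_1$: $a_d=x_d=0$, $b_d=1$, $y_d=2$, $a_{[d-1]}\notin\{b_{[d-1]},x_{[d-1]},y_{[d-1]}\}$, and there is $i\in[d-1]$ with $b_i\in\{a_i,x_i,y_i\}$; $\varphi_2$: $a_d=b_d=0$, $x_d=1$, $y_d=2$, and either $a_{[d-1]}\notin\{b_{[d-1]},x_{[d-1]},y_{[d-1]}\}$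 or $b_{[d-1]}\notin\{a_{[d-1]},x_{[d-1]},y_{[d-1]}\}$, and there are two distinct $i,i'\in[d-1]$, $u\in\{a,b\}$, $w\in\{x,y\}$ with $u_i=w_i$ and $u_{i'}=w_{i'}$; $\varphi_3$: $a_d=x_d=0$, $b_d=y_d=1$, and there is $i\in[d-1]$ with $a_i=y_i$ or $b_i=x_i$; $\varphi_4$: $a_d=0$, $b_d=x_d=1$, $y_d=2$, $b_{[d-1]}\notin\{a_{[d-1]},x_{[d-1]},y_{[d-1]}\}$, and there is $i\in[d-1]$ with $a_i\in\{b_i,x_i,y_i\}$. *)

theory Defs
  imports Main
begin

text \<open>Vertices of Q^3_d: sequences of length d over {0,1,2}, as lists; the paper's
coordinate i (1-based) is list index i-1.\<close>

definition verts :: "nat \<Rightarrow> nat list set" where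
  "verts d = {v. length v = d \<and> set v \<subseteq> {0,1,2}}"

definition is_edge :: "nat \<Rightarrow> nat list set \<Rightarrow> bool" where
  "is_edge d e \<longleftrightarrow> (\<exists>u v w. e = {u, v, w} \<and> u \<in> verts d \<and> v \<in> verts d \<and> w \<in> verts d
     \<and> u \<noteq> v \<and> u \<noteq> w \<and> v \<noteq> w
     \<and> (\<exists>i<d. \<forall>j<d. j \<noteq> i \<longrightarrow> u ! j = v ! j \<and> v ! j = w ! j))"

definition path_edge :: "nat list list \<Rightarrow> nat \<Rightarrow> nat list set" where
  "path_edge vs i = {vs ! (2*i), vs ! (2*i+1), vs ! (2*i+2)}"

definition loose_path :: "nat \<Rightarrow> nat list list \<Rightarrow> bool" where
  "loose_path d vs \<longleftrightarrow> odd (length vs) \<and> distinct vs \<and> set vs \<subseteq> verts d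
     \<and> (\<forall>i. 2*i+2 < length vs \<longrightarrow> is_edge d (path_edge vs i))
     \<and> inj_on (path_edge vs) {i. 2*i+2 < length vs}"

definition loose_ham_connected :: "nat \<Rightarrow> bool" where
  "loose_ham_connected d \<longleftrightarrow> (\<forall>a\<in>verts d. \<forall>b\<in>verts d. a \<noteq> b \<longrightarrow>
     (\<exists>vs. loose_path d vs \<and> hd vs = a \<and> last vs = b \<and> set vs = verts d))"

definition config :: "nat \<Rightarrow> nat list \<Rightarrow> nat list \<Rightarrow> nat list \<Rightarrow> nat list \<Rightarrow> bool" where
  "config d a b x y \<longleftrightarrow> a \<in> verts d \<and> b \<in> verts d \<and> x \<in> verts d \<and> y \<in> verts d
     \<and> distinct [a, b, x, y]"

definition covered :: "nat \<Rightarrow> nat list \<Rightarrow> nat list \<Rightarrow> nat list \<Rightarrow> nat list \<Rightarrow> bool" where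
  "covered d a b x y \<longleftrightarrow> (\<exists>vs. loose_path d vs \<and> hd vs = a \<and> last vs = b
     \<and> set vs = verts d - {x, y})"

definition sym_map :: "nat \<Rightarrow> (nat \<Rightarrow> nat) \<Rightarrow> (nat \<Rightarrow> nat \<Rightarrow> nat) \<Rightarrow> nat list \<Rightarrow> nat list" where
  "sym_map d \<sigma> \<tau> v = map (\<lambda>i. \<tau> i (v ! \<sigma> i)) [0..<d]"

definition is_symmetry :: "nat \<Rightarrow> (nat \<Rightarrow> nat) \<Rightarrow> (nat \<Rightarrow> nat \<Rightarrow> nat) \<Rightarrow> bool" where
  "is_symmetry d \<sigma> \<tau> \<longleftrightarrow> bij_betw \<sigma> {..<d} {..<d}
     \<and> (\<forall>i<d. bij_betw (\<tau> i) {0,1,2} {0,1,2})"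

text \<open>Coordinate d is index d-1; v_[d-1] is take (d-1) v; i \<in> [d-1] is index i < d-1.\<close>

definition phi1 :: "nat \<Rightarrow> nat list \<Rightarrow> nat list \<Rightarrow> nat list \<Rightarrow> nat list \<Rightarrow> bool" where
  "phi1 d a b x y \<longleftrightarrow> a ! (d-1) = 0 \<and> x ! (d-1) = 0 \<and> b ! (d-1) = 1 \<and> y ! (d-1) = 2
     \<and> take (d-1) a \<notin> {take (d-1) b, take (d-1) x, take (d-1) y}
     \<and> (\<exists>i<d-1. b ! i \<in> {a ! i, x ! i, y ! i})"

definition phi2 :: "nat \<Rightarrow> nat list \<Rightarrow> nat list \<Rightarrow> nat list \<Rightarrow> nat list \<Rightarrow> bool" where
  "phi2 d a b x y \<longleftrightarrow> a ! (d-1) = 0 \<and> b ! (d-1) = 0 \<and> x ! (d-1) = 1 \<and> y ! (d-1) = 2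
     \<and> (take (d-1) a \<notin> {take (d-1) b, take (d-1) x, take (d-1) y}
        \<or> take (d-1) b \<notin> {take (d-1) a, take (d-1) x, take (d-1) y})
     \<and> (\<exists>i<d-1. \<exists>i'<d-1. i \<noteq> i' \<and> (\<exists>u\<in>{a, b}. \<exists>w\<in>{x, y}. u ! i = w ! i \<and> u ! i' = w ! i'))"

definition phi3 :: "nat \<Rightarrow> nat list \<Rightarrow> nat list \<Rightarrow> nat list \<Rightarrow> nat list \<Rightarrow> bool" where
  "phi3 d a b x y \<longleftrightarrow> a ! (d-1) = 0 \<and> x ! (d-1) = 0 \<and> b ! (d-1) = 1 \<and> y ! (d-1) = 1
     \<and> (\<exists>i<d-1. a ! i = y ! i \<or> b ! i = x ! i)"

definition phi4 :: "nat \<Rightarrow> nat list \<Rightarrow> nat list \<Rightarrow> nat list \<Rightarrow> nat list \<Rightarrow> bool" where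
  "phi4 d a b x y \<longleftrightarrow> a ! (d-1) = 0 \<and> b ! (d-1) = 1 \<and> x ! (d-1) = 1 \<and> y ! (d-1) = 2
     \<and> take (d-1) b \<notin> {take (d-1) a, take (d-1) x, take (d-1) y}
     \<and> (\<exists>i<d-1. a ! i \<in> {b ! i, x ! i, y ! i})"

definition of_type ::
  "(nat \<Rightarrow> nat list \<Rightarrow> nat list \<Rightarrow> nat list \<Rightarrow> nat list \<Rightarrow> bool)
   \<Rightarrow> nat \<Rightarrow> nat list \<Rightarrow> nat list \<Rightarrow> nat list \<Rightarrow> nat list \<Rightarrow> bool" where
  "of_type \<phi> d a b x y \<longleftrightarrow> (\<exists>\<sigma> \<tau>. is_symmetry d \<sigma> \<tau> \<and>
     (let s = sym_map d \<sigma> \<tau> in \<phi> d (s a) (s b) (s x) (s y) \<or> \<phi> d (s a) (s b) (s y) (s x)))"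

end

theory Submission
  imports Defs
begin

lemma perm3:
  assumes "u0 \<in> {0,1,2::nat}" "u1 \<in> {0,1,2::nat}" "u0 \<noteq> u1"
  shows "bij_betw (\<lambda>v. if v = u0 then 0 else if v = u1 then 1 else (2::nat)) {0,1,2} {0,1,2}"
proof -
  have "(u0=0 \<and> u1=1) \<or> (u0=0 \<and> u1=2) \<or> (u0=1 \<and> u1=0) \<or> (u0=1 \<and> u1=2) \<or> (u0=2 \<and> u1=0) \<or> (u0=2 \<and> u1=1)"
    using assms by auto
  then show ?thesis
    by (elim disjE conjE; simp add: bij_betw_def inj_on_def; auto)
qed

lemma sym_nth: "i < d \<Longrightarrow> sym_map d \<sigma> \<tau> v ! i = \<tau> i (v ! \<sigma> i)"
  by (simp add: sym_map_def)

lemma extend_path: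
  assumes lp: "loose_path d vs" and hv: "hd vs = a" and lv: "last vs = c"
    and sv: "set vs = verts d - {y, b}"
    and e: "is_edge d {c, y, b}" and yb: "y \<noteq> b" and yv: "y \<in> verts d" and bv: "b \<in> verts d"
    and ne: "vs \<noteq> []"
  shows "loose_path d (vs @ [y, b]) \<and> hd (vs @ [y, b]) = a \<and> last (vs @ [y, b]) = b
     \<and> set (vs @ [y, b]) = verts d"
proof -
  let ?w = "vs @ [y, b]"
  have odd: "odd (length vs)" and dist: "distinct vs" and sub: "set vs \<subseteq> verts d"
    and ed: "\<And>i. 2*i+2 < length vs \<Longrightarrow> is_edge d (path_edge vs i)"
    and inj: "inj_on (path_edge vs) {i. 2*i+2 < length vs}"
    using lp unfolding loose_path_def by auto
  obtain m where m: "length vs = 2*m+1" using odd by (metis oddE)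
  have pe_eq: "path_edge ?w i = path_edge vs i" if "2*i+2 < length vs" for i
    using that by (simp add: path_edge_def nth_append)
  have lastc: "vs ! (2*m) = c" using lv ne m by (simp add: last_conv_nth)
  have pe_m: "path_edge ?w m = {c, y, b}"
    using m lastc by (simp add: path_edge_def nth_append)
  have sub_pe: "path_edge vs i \<subseteq> set vs" if "2*i+2 < length vs" for i
    using that by (auto simp: path_edge_def)
  have ynot: "y \<notin> set vs" using sv by auto
  have idx: "2*i+2 < length ?w \<Longrightarrow> 2*i+2 < length vs \<or> i = m" for i using m by auto
  have "\<forall>i. 2*i+2 < length ?w \<longrightarrow> is_edge d (path_edge ?w i)"
    using idx pe_eq ed pe_m e by metis
  moreover have "inj_on (path_edge ?w) {i. 2*i+2 < length ?w}"
  proof (rule inj_onI)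
    fix i i' assume i: "i \<in> {i. 2*i+2 < length ?w}" and i': "i' \<in> {i. 2*i+2 < length ?w}"
      and eq: "path_edge ?w i = path_edge ?w i'"
    have nm: "path_edge ?w i \<noteq> path_edge ?w m" if "2*i+2 < length vs" for i
      using that pe_eq pe_m sub_pe ynot by blast
    show "i = i'"
      using idx[of i] idx[of i'] i i' eq nm inj pe_eq unfolding inj_on_def by (metis mem_Collect_eq)
  qed
  moreover have "odd (length ?w)" using odd by simp
  moreover have "distinct ?w" using dist sv yb by auto
  moreover have "set ?w = verts d" using sv yv bv by auto
  ultimately show ?thesis using hv ne unfolding loose_path_def by auto
qed

theorem proposition1p6:
  fixes d :: nat
  assumes "d \<ge> 4"
    and "\<forall>a b x y. config d a b x y \<and>
           (of_type phi1 d a b x y \<or> of_type phi2 d a b x y \<or> of_type phi3 d a b x y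
            \<or> of_type phi4 d a b x y) \<longrightarrow> covered d a b x y"
  shows "loose_ham_connected d"
  unfolding loose_ham_connected_def
proof (intro ballI impI)
  fix a b assume a: "a \<in> verts d" and b: "b \<in> verts d" and ab: "a \<noteq> b"
  have la: "length a = d" and lb: "length b = d" and sa: "set a \<subseteq> {0,1,2}" and sb: "set b \<subseteq> {0,1,2}"
    using a b by (auto simp: verts_def)
  obtain k where k: "k < d" "a!k \<noteq> b!k" using ab la lb nth_equalityI by metis
  define j where "j = (if k = 0 then 1 else 0::nat)"
  have jk: "j \<noteq> k" and jd: "j < d - 1" using assms(1) by (auto simp: j_def)
  define u0 where "u0 = a!j"
  have u0: "u0 \<in> {0,1,2}" using sa jd la nth_mem unfolding u0_def
    by (metis diff_le_self order_less_le_trans subsetD)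
  have pj: "b!j \<in> {0,1,2}" using sb jd lb nth_mem
    by (metis diff_le_self order_less_le_trans subsetD)
  define u1 where "u1 = (if 0 \<noteq> u0 \<and> 0 \<noteq> b!j then 0 else if 1 \<noteq> u0 \<and> 1 \<noteq> b!j then 1 else (2::nat))"
  have u1: "u1 \<in> {0,1,2}" "u1 \<noteq> u0" "u1 \<noteq> b!j" using u0 pj unfolding u1_def by auto
  define u2 where "u2 = 3 - u0 - u1"
  have u2: "u2 \<in> {0,1,2}" "u2 \<noteq> u0" "u2 \<noteq> u1" using u0 u1 by (auto simp: u2_def)
  have p: "b!j = u0 \<or> b!j = u2" using u0 u1 pj by (auto simp: u2_def)
  define c where "c = b[j:=u1]"
  define x0 where "x0 = b[j:=u0]"
  define y0 where "y0 = b[j:=u2]"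
  define y' where "y' = (if b!j = u0 then y0 else x0)"
  have jd': "j < d" using jd by simp
  have upd_v: "b[j:=u] \<in> verts d" if "u \<in> {0,1,2}" for u
    using that lb sb set_update_subset_insert[of b j u] by (auto simp: verts_def)
  have cv: "c \<in> verts d" and x0v: "x0 \<in> verts d" and y0v: "y0 \<in> verts d"
    using upd_v u0 u1 u2 by (auto simp: c_def x0_def y0_def)
  have off: "w ! l = b ! l" if "w \<in> {c, x0, y0}" "l \<noteq> j" for w l
    using that by (auto simp: c_def x0_def y0_def)
  have atj: "c ! j = u1" "x0 ! j = u0" "y0 ! j = u2" using lb jd' by (auto simp: c_def x0_def y0_def)
  define \<sigma> where "\<sigma> = (\<lambda>i. if i = j then d-1 else if i = d-1 then j else i)"
  define \<tau> where "\<tau> = (\<lambda>i v. if i = d-1 then (if v = u0 then 0 else if v = u1 then 1 else (2::nat)) else v)"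
  define s where "s = sym_map d \<sigma> \<tau>"
  have \<sigma>\<sigma>: "\<sigma> (\<sigma> i) = i" for i using jd by (auto simp: \<sigma>_def)
  have \<sigma>lt: "i < d \<Longrightarrow> \<sigma> i < d" for i using jd by (auto simp: \<sigma>_def)
  have sym: "is_symmetry d \<sigma> \<tau>"
    unfolding is_symmetry_def
  proof (intro conjI allI impI)
    show "bij_betw \<sigma> {..<d} {..<d}"
      by (rule bij_betw_byWitness[where f'=\<sigma>]) (auto simp: \<sigma>\<sigma> \<sigma>lt)
    fix i assume "i < d"
    show "bij_betw (\<tau> i) {0, 1, 2} {0, 1, 2}"
    proof (cases "i = d - 1")
      case False then show ?thesis using bij_betw_id[of "{0,1,2::nat}"] by (simp add: \<tau>_def id_def)
    next
      case True
      have "u0 \<in> {0,1,2}" "u1 \<in> {0,1,2}" "u0 \<noteq> u1" using u0 u1 by auto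
      then show ?thesis using True perm3 unfolding \<tau>_def by simp
    qed
  qed
  have sd: "s v ! (d-1) = \<tau> (d-1) (v ! j)" for v
    using assms(1) sym_nth[of "d-1" d \<sigma> \<tau> v] by (simp add: s_def \<sigma>_def)
  have sl: "i < d - 1 \<Longrightarrow> s v ! i = v ! \<sigma> i" for v i
    using sym_nth[of i d \<sigma> \<tau> v] by (simp add: s_def \<tau>_def)
  have tk: "take (d-1) (s a) \<noteq> take (d-1) (s w)" if "w \<in> {c, x0, y0}" for w
  proof
    assume h: "take (d-1) (s a) = take (d-1) (s w)"
    have i: "\<sigma> k < d - 1" using k jk jd by (auto simp: \<sigma>_def)
    have "s a ! \<sigma> k = s w ! \<sigma> k" using h i by (metis nth_take)
    then have "a ! k = w ! k" using sl[OF i] \<sigma>\<sigma> by simp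
    then show False using off[OF that jk[symmetric]] k by simp
  qed
  have phi: "phi1 d (s a) (s c) (s x0) (s y0)"
    unfolding phi1_def
  proof (intro conjI)
    show "\<exists>i<d - 1. s c ! i \<in> {s a ! i, s x0 ! i, s y0 ! i}"
    proof (intro exI conjI)
      show "0 < d - 1" using assms(1) by simp
      have "\<sigma> 0 \<noteq> j" using jd by (auto simp: \<sigma>_def)
      then show "s c ! 0 \<in> {s a ! 0, s x0 ! 0, s y0 ! 0}"
        using sl[of 0] off[of c "\<sigma> 0"] off[of x0 "\<sigma> 0"] assms(1) by simp
    qed
  qed (use sd atj u0 u1 u2 tk in \<open>auto simp: \<tau>_def u0_def\<close>)
  have ot: "of_type phi1 d a c y' b"
  proof (cases "b!j = u0")
    case True
    then have "x0 = b" "y' = y0" by (auto simp: x0_def y'_def)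
    then show ?thesis using sym phi unfolding of_type_def s_def Let_def by blast
  next
    case False
    then have "y0 = b" "y' = x0" using p by (auto simp: y0_def y'_def)
    then show ?thesis using sym phi unfolding of_type_def s_def Let_def by blast
  qed
  have lbj: "b = b[j := b!j]" by simp
  have cb: "c \<noteq> b" using atj u1 by auto
  have yb: "y' \<noteq> b" using atj u2 by (auto simp: y'_def)
  have cy: "c \<noteq> y'" using atj u1 u2 by (auto simp: y'_def)
  have ac: "a \<noteq> w" if "w \<in> {c, x0, y0}" for w using off[OF that jk[symmetric]] k by auto
  have yv: "y' \<in> verts d" using x0v y0v by (simp add: y'_def)
  have cfg: "config d a c y' b"
    unfolding config_def using a b cv yv cb yb cy ac ab by (auto simp: y'_def)
  then have "covered d a c y' b" using assms(2) ot by blast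
  then obtain vs where vs: "loose_path d vs" "hd vs = a" "last vs = c" "set vs = verts d - {y', b}"
    unfolding covered_def by blast
  have "a \<notin> {y', b}" using cfg unfolding config_def by auto
  then have "a \<in> set vs" using vs(4) a by blast
  then have ne: "vs \<noteq> []" by auto
  have e0: "\<exists>i<d. \<forall>l<d. l \<noteq> i \<longrightarrow> c ! l = y' ! l \<and> y' ! l = b ! l"
    using jd' off by (auto simp: y'_def)
  have e: "is_edge d {c, y', b}"
    unfolding is_edge_def
    apply (rule exI[of _ c], rule exI[of _ y'], rule exI[of _ b])
    using cv yv b cb yb cy e0 by blast
  show "\<exists>vs. loose_path d vs \<and> hd vs = a \<and> last vs = b \<and> set vs = verts d"
    using extend_path[OF vs e yb yv b ne] by blast
qed

end
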